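(* Let $\mathcal{F}_{Q,2}=\{a/q: 0<a\le q\le Q,\ \gcd(a,q)=1,\ q\text{ square-free}\}$. Then, as $Q\to\infty$, \[\#\mathcal{F}_{Q,2}=\frac{3Q^2}{\pi^2}\prod_{p}\left(1-\frac{1}{p(p+1)}\right)+O\!\left(Q^{3/2}\right),\] the product being over all primes $p$.
   Context: A positive integer is square-free if it is not divisible by the square of any prime. *)

theory Defs
  imports "HOL-Analysis.Analysis" "HOL-Computational_Algebra.Squarefree" "HOL-Library.Landau_Symbols"
begin

definition farey_sqfree :: "nat \<Rightarrow> rat set" where
  "farey_sqfree Q = {of_nat a / of_nat q | a q. 0 < a \<and> a \<le> q \<and> q \<le> Q \<and> coprime a q \<and> squarefree q}"

definition sqfree_farey_const :: real where
  "sqfree_farey_const = (\<Prod>p. if prime p then 1 - 1 / (real p * (real p + 1)) else 1)"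

end

theory Submission
  imports Defs "HOL-Number_Theory.Number_Theory" "HOL-Real_Asymp.Real_Asymp"
begin


lemma sqf_pos: "squarefree (a::nat) \<Longrightarrow> a > 0"
  by (metis gr0I not_squarefree_0)

lemma pf_prod_primes:
  fixes A :: "nat set"
  assumes "finite A" "\<forall>p\<in>A. prime p"
  shows "prime_factors (\<Prod>A) = A"
proof -
  have "0 \<notin> id ` A" using assms(2) by (auto dest: prime_gt_0_nat)
  then have "prime_factors (prod id A) = \<Union> ((prime_factors \<circ> id) ` A)"
    using prime_factors_prod[OF assms(1)] by blast
  also have "\<dots> = A" using assms(2) by (auto simp: prime_prime_factors)
  finally show ?thesis by simp
qed

lemma prod_primes_pos:
  fixes A :: "nat set"
  assumes "\<forall>p\<in>A. prime p"
  shows "\<Prod>A > 0"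
  using assms by (metis prime_gt_0_nat prod_pos)

lemma sqf_prod_primes:
  fixes A :: "nat set"
  assumes "\<forall>p\<in>A. prime p"
  shows "squarefree (\<Prod>A)"
  unfolding id_def[symmetric]
  apply (rule squarefree_prod_coprime)
  using assms by (auto simp: primes_coprime squarefree_prime)

lemma sqf_prod_pf:
  fixes a :: nat
  assumes "squarefree a"
  shows "\<Prod>(prime_factors a) = a"
proof -
  have a0: "a \<noteq> 0" using sqf_pos[OF assms(1)] by simp
  have "a = (\<Prod>p\<in>prime_factors a. p ^ multiplicity p a)"
    using sqf_pos[OF assms] by (simp add: prime_factorization_nat)
  also have "\<dots> = (\<Prod>p\<in>prime_factors a. p)"
    using assms a0 by (intro prod.cong) (auto simp: squarefree_factorial_semiring')
  finally show ?thesis by simp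
qed
lemma sqf_dvd_iff:
  fixes a m :: nat
  assumes "squarefree a" "m \<noteq> 0"
  shows "a dvd m \<longleftrightarrow> prime_factors a \<subseteq> prime_factors m"
proof
  assume "a dvd m" then show "prime_factors a \<subseteq> prime_factors m"
    using assms sqf_pos[OF assms(1)] by (simp add: dvd_prime_factors)
next
  assume sub: "prime_factors a \<subseteq> prime_factors m"
  have a0: "a \<noteq> 0" using sqf_pos[OF assms(1)] by simp
  show "a dvd m"
  proof (subst prime_multiplicity_le_imp_dvd[OF a0 assms(2)], intro allI impI)
    fix p :: nat assume p: "prime p"
    show "multiplicity p a \<le> multiplicity p m"
    proof (cases "p \<in> prime_factors a")
      case True
      then have "multiplicity p a = 1" using assms(1) a0 by (auto simp: squarefree_factorial_semiring')
      moreover have "multiplicity p m > 0" using True sub p assms(2) by (auto simp: prime_factors_multiplicity)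
      ultimately show ?thesis by simp
    next
      case False
      then have "multiplicity p a = 0" using p a0 by (auto simp: prime_factors_multiplicity)
      then show ?thesis by simp
    qed
  qed
qed

lemma coprime_pf_iff:
  fixes a b :: nat
  assumes "a \<noteq> 0" "b \<noteq> 0"
  shows "coprime a b \<longleftrightarrow> prime_factors a \<inter> prime_factors b = {}"
proof
  assume c: "coprime a b"
  show "prime_factors a \<inter> prime_factors b = {}"
  proof (rule ccontr)
    assume "prime_factors a \<inter> prime_factors b \<noteq> {}"
    then obtain p where "p \<in> prime_factors a" "p \<in> prime_factors b" by blast
    then have "prime p" "p dvd a" "p dvd b" by (auto simp: in_prime_factors_iff)
    with c show False by (meson coprime_common_divisor not_prime_unit)
  qed
next
  assume d: "prime_factors a \<inter> prime_factors b = {}"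
  show "coprime a b"
  proof (rule coprimeI)
    fix c assume "c dvd a" "c dvd b"
    show "is_unit c"
    proof (rule ccontr)
      assume "\<not> is_unit c"
      then obtain p where "prime p" "p dvd c" using \<open>c dvd a\<close> assms(1)
        by (metis dvd_0_left prime_divisor_exists)
      then have "p \<in> prime_factors a" "p \<in> prime_factors b"
        using \<open>c dvd a\<close> \<open>c dvd b\<close> assms by (auto simp: in_prime_factors_iff intro: dvd_trans)
      with d show False by blast
    qed
  qed
qed

lemma N1:
  fixes a b n :: nat
  assumes "squarefree a" "squarefree b" "coprime a b" "n \<noteq> 0"
  shows "a * b^2 dvd n \<longleftrightarrow> prime_factors a \<subseteq> prime_factors n \<and> (\<forall>p\<in>prime_factors b. p^2 dvd n)"
proof
  assume h: "a * b^2 dvd n"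
  then have "a dvd n" "b^2 dvd n" by (auto intro: dvd_mult_left dvd_mult_right)
  then show "prime_factors a \<subseteq> prime_factors n \<and> (\<forall>p\<in>prime_factors b. p^2 dvd n)"
    using assms by (auto simp: dvd_prime_factors in_prime_factors_iff intro: dvd_trans[OF dvd_power_same] )
next
  assume h: "prime_factors a \<subseteq> prime_factors n \<and> (\<forall>p\<in>prime_factors b. p^2 dvd n)"
  have "a dvd n" using h sqf_dvd_iff assms by blast
  have sp0: "square_part n \<noteq> 0" using assms(4) by simp
  have "prime_factors b \<subseteq> prime_factors (square_part n)"
  proof
    fix p assume "p \<in> prime_factors b"
    then have "prime p" "p^2 dvd n" using h by (auto simp: in_prime_factors_iff)
    then show "p \<in> prime_factors (square_part n)"
      using sp0 by (auto simp: in_prime_factors_iff dvd_square_part_iff)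
  qed
  then have "b dvd square_part n" using sqf_dvd_iff[OF assms(2) sp0] by blast
  then have "b^2 dvd n" by (simp add: dvd_square_part_iff)
  moreover have "coprime a (b^2)" using assms(3) by simp
  ultimately show "a * b^2 dvd n" using \<open>a dvd n\<close> by (simp add: divides_mult)
qed





definition II :: "(nat \<times> nat) set" where
  "II = {(a,b). squarefree a \<and> squarefree b \<and> coprime a b}"

definition hh :: "nat \<Rightarrow> nat \<Rightarrow> real" where
  "hh a b = (\<Prod>p\<in>prime_factors a. - 1 / real p) * (\<Prod>p\<in>prime_factors b. - (1 - 1 / real p))"

lemma bridge_bij:
  fixes P P2 :: "nat set"
  assumes "finite P" "\<forall>p\<in>P. prime p" "P2 \<subseteq> P"
  shows "bij_betw (\<lambda>(B,A). (\<Prod>A, \<Prod>B)) (SIGMA B:Pow P2. Pow (P - B))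
           {(a,b)\<in>II. prime_factors a \<subseteq> P \<and> prime_factors b \<subseteq> P2}"
proof -
  have fin: "finite X" "\<forall>p\<in>X. prime p" if "X \<subseteq> P" for X
    using that assms finite_subset by auto
  show ?thesis
  proof (rule bij_betw_byWitness[where f' = "\<lambda>(a,b). (prime_factors b, prime_factors a)"])
    show "\<forall>x\<in>SIGMA B:Pow P2. Pow (P - B).
            (case case x of (B, A) \<Rightarrow> (\<Prod> A, \<Prod> B) of (a, b) \<Rightarrow> (prime_factors b, prime_factors a)) = x"
    proof
      fix x assume "x \<in> (SIGMA B:Pow P2. Pow (P - B))"
      then obtain B A where x: "x = (B,A)" "B \<subseteq> P2" "A \<subseteq> P - B" by auto
      then have "A \<subseteq> P" "B \<subseteq> P" using assms by auto
      then show "(case case x of (B, A) \<Rightarrow> (\<Prod> A, \<Prod> B) of (a, b) \<Rightarrow> (prime_factors b, prime_factors a)) = x"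
        using x fin pf_prod_primes by auto
    qed
    show "\<forall>y\<in>{(a,b)\<in>II. prime_factors a \<subseteq> P \<and> prime_factors b \<subseteq> P2}.
            (case case y of (a, b) \<Rightarrow> (prime_factors b, prime_factors a) of (B, A) \<Rightarrow> (\<Prod> A, \<Prod> B)) = y"
      by (auto simp: II_def sqf_prod_pf)
    show "(\<lambda>(B, A). (\<Prod> A, \<Prod> B)) ` (SIGMA B:Pow P2. Pow (P - B))
          \<subseteq> {(a,b)\<in>II. prime_factors a \<subseteq> P \<and> prime_factors b \<subseteq> P2}"
    proof clarify
      fix B A assume h: "B \<subseteq> P2" "A \<subseteq> P - B"
      then have AB: "A \<subseteq> P" "B \<subseteq> P" using assms by auto
      have pA: "prime_factors (\<Prod>A) = A" and pB: "prime_factors (\<Prod>B) = B"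
        using AB fin pf_prod_primes by auto
      have "\<Prod>A \<noteq> 0" "\<Prod>B \<noteq> 0" using AB fin prod_primes_pos by (metis neq0_conv)+
      moreover have "prime_factors (\<Prod>A) \<inter> prime_factors (\<Prod>B) = {}" using pA pB h by auto
      ultimately have "coprime (\<Prod>A) (\<Prod>B)" using coprime_pf_iff by blast
      then show "(\<Prod>A, \<Prod>B) \<in> II \<and> prime_factors (\<Prod>A) \<subseteq> P \<and> prime_factors (\<Prod>B) \<subseteq> P2"
        using pA pB AB h fin sqf_prod_primes by (auto simp: II_def)
    qed
    show "(\<lambda>(a, b). (prime_factors b, prime_factors a)) ` {(a,b)\<in>II. prime_factors a \<subseteq> P \<and> prime_factors b \<subseteq> P2}
          \<subseteq> (SIGMA B:Pow P2. Pow (P - B))"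
    proof clarify
      fix a b assume h: "(a,b) \<in> II" "prime_factors a \<subseteq> P" "prime_factors b \<subseteq> P2"
      then have "prime_factors a \<inter> prime_factors b = {}"
        using coprime_pf_iff sqf_pos by (auto simp: II_def)
      then show "prime_factors b \<in> Pow P2 \<and> prime_factors a \<in> Pow (P - prime_factors b)"
        using h by auto
    qed
  qed
qed

lemma bridge_sum:
  fixes P P2 :: "nat set" and G :: "nat \<Rightarrow> nat \<Rightarrow> real"
  assumes "finite P" "\<forall>p\<in>P. prime p" "P2 \<subseteq> P"
  shows "(\<Sum>(a,b)\<in>{(a,b)\<in>II. prime_factors a \<subseteq> P \<and> prime_factors b \<subseteq> P2}. G a b)
       = (\<Sum>B\<in>Pow P2. \<Sum>A\<in>Pow (P - B). G (\<Prod>A) (\<Prod>B))"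
proof -
  have "(\<Sum>(a,b)\<in>{(a,b)\<in>II. prime_factors a \<subseteq> P \<and> prime_factors b \<subseteq> P2}. G a b)
      = (\<Sum>x\<in>(SIGMA B:Pow P2. Pow (P - B)). (\<lambda>(a,b). G a b) ((\<lambda>(B,A). (\<Prod>A, \<Prod>B)) x))"
    by (rule sum.reindex_bij_betw[symmetric, OF bridge_bij[OF assms]])
  also have "\<dots> = (\<Sum>(B,A)\<in>(SIGMA B:Pow P2. Pow (P - B)). G (\<Prod>A) (\<Prod>B))"
    by (rule sum.cong) auto
  also have "\<dots> = (\<Sum>B\<in>Pow P2. \<Sum>A\<in>Pow (P - B). G (\<Prod>A) (\<Prod>B))"
    using assms finite_subset by (subst sum.Sigma) auto
  finally show ?thesis .
qed

lemma pair_sum_prod: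
  fixes P P2 :: "'a set" and f g :: "'a \<Rightarrow> real"
  assumes "finite P" "P2 \<subseteq> P"
  shows "(\<Sum>B\<in>Pow P2. \<Sum>A\<in>Pow (P - B). (prod f A) * (prod g B))
       = (\<Prod>p\<in>P. 1 + f p + (if p \<in> P2 then g p else 0))"
proof -
  let ?g' = "\<lambda>p. if p \<in> P2 then g p else 0"
  have "(\<Prod>p\<in>P. 1 + f p + ?g' p) = (\<Prod>p\<in>P. ?g' p + (1 + f p))"
    by (simp add: algebra_simps)
  also have "\<dots> = (\<Sum>B\<in>Pow P. (\<Prod>p\<in>B. ?g' p) * (\<Prod>p\<in>P - B. 1 + f p))"
    by (rule prod_add[OF assms(1)])
  also have "\<dots> = (\<Sum>B\<in>Pow P2. (\<Prod>p\<in>B. ?g' p) * (\<Prod>p\<in>P - B. 1 + f p))"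
  proof (rule sum.mono_neutral_right)
    show "finite (Pow P)" using assms by simp
    show "Pow P2 \<subseteq> Pow P" using assms by auto
    show "\<forall>B\<in>Pow P - Pow P2. (\<Prod>p\<in>B. ?g' p) * (\<Prod>p\<in>P - B. 1 + f p) = 0"
    proof
      fix B assume "B \<in> Pow P - Pow P2"
      then obtain q where "q \<in> B" "q \<notin> P2" "B \<subseteq> P" by auto
      then have "(\<Prod>p\<in>B. ?g' p) = 0" using assms finite_subset[of B P]
        by (intro prod_zero) auto
      then show "(\<Prod>p\<in>B. ?g' p) * (\<Prod>p\<in>P - B. 1 + f p) = 0" by simp
    qed
  qed
  also have "\<dots> = (\<Sum>B\<in>Pow P2. (prod g B) * (\<Sum>A\<in>Pow (P - B). (prod f A)))"
  proof (rule sum.cong[OF refl])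
    fix B assume B: "B \<in> Pow P2"
    have "(\<Prod>p\<in>P - B. 1 + f p) = (\<Prod>p\<in>P - B. f p + 1)" by (simp add: add.commute)
    also have "\<dots> = (\<Sum>A\<in>Pow (P - B). (prod f A) * (\<Prod>p\<in>P - B - A. 1))"
      using assms by (intro prod_add) auto
    finally have "(\<Prod>p\<in>P - B. 1 + f p) = (\<Sum>A\<in>Pow (P - B). (prod f A))" by simp
    moreover have "(\<Prod>p\<in>B. ?g' p) = (prod g B)" using B by (intro prod.cong) auto
    ultimately show "(\<Prod>p\<in>B. ?g' p) * (\<Prod>p\<in>P - B. 1 + f p) = (prod g B) * (\<Sum>A\<in>Pow (P - B). (prod f A))"
      by simp
  qed
  also have "\<dots> = (\<Sum>B\<in>Pow P2. \<Sum>A\<in>Pow (P - B). (prod f A) * (prod g B))"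
    by (simp add: sum_distrib_left mult.commute)
  finally show ?thesis by simp
qed

lemma hh_prod:
  fixes A B :: "nat set"
  assumes "finite A" "finite B" "\<forall>p\<in>A. prime p" "\<forall>p\<in>B. prime p"
  shows "hh (\<Prod>A) (\<Prod>B) = (\<Prod>p\<in>A. - 1 / real p) * (\<Prod>p\<in>B. - (1 - 1 / real p))"
  using assms by (simp add: hh_def pf_prod_primes)

lemma ID1:
  fixes n :: nat
  assumes "n > 0"
  shows "(if squarefree n then real (totient n) else 0)
         = real n * (\<Sum>(a,b)\<in>{(a,b)\<in>II. a * b^2 dvd n}. hh a b)"
proof -
  define P where "P = prime_factors n"
  define P2 where "P2 = {p\<in>P. p^2 dvd n}"
  have finP: "finite P" and prP: "\<forall>p\<in>P. prime p" and P2P: "P2 \<subseteq> P"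
    by (auto simp: P_def P2_def)
  have seteq: "{(a,b)\<in>II. a * b^2 dvd n} = {(a,b)\<in>II. prime_factors a \<subseteq> P \<and> prime_factors b \<subseteq> P2}"
  proof (intro equalityI subsetI)
    fix x assume "x \<in> {(a,b)\<in>II. a * b^2 dvd n}"
    then obtain a b where x: "x = (a,b)" "(a,b) \<in> II" "a * b^2 dvd n" by auto
    then have h: "prime_factors a \<subseteq> P \<and> (\<forall>p\<in>prime_factors b. p^2 dvd n)"
      using N1[of a b n] assms by (auto simp: II_def P_def)
    have "prime_factors b \<subseteq> P2"
    proof
      fix p assume p: "p \<in> prime_factors b"
      then have "p^2 dvd n" "prime p" using h by auto
      then have "p \<in> P" using assms unfolding P_def
        by (metis dvd_power dvd_trans in_prime_factors_iff less_numeral_extra(3) prime_gt_0_nat zero_less_numeral)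
      then show "p \<in> P2" using \<open>p^2 dvd n\<close> by (simp add: P2_def)
    qed
    then show "x \<in> {(a,b)\<in>II. prime_factors a \<subseteq> P \<and> prime_factors b \<subseteq> P2}" using x h by auto
  next
    fix x assume "x \<in> {(a,b)\<in>II. prime_factors a \<subseteq> P \<and> prime_factors b \<subseteq> P2}"
    then obtain a b where x: "x = (a,b)" "(a,b) \<in> II" "prime_factors a \<subseteq> P" "prime_factors b \<subseteq> P2" by auto
    then have "a * b^2 dvd n" using N1[of a b n] assms by (auto simp: II_def P_def P2_def)
    then show "x \<in> {(a,b)\<in>II. a * b^2 dvd n}" using x by auto
  qed
  have "(\<Sum>(a,b)\<in>{(a,b)\<in>II. a * b^2 dvd n}. hh a b)
      = (\<Sum>B\<in>Pow P2. \<Sum>A\<in>Pow (P - B). hh (\<Prod>A) (\<Prod>B))"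
    unfolding seteq by (rule bridge_sum[OF finP prP P2P])
  also have "\<dots> = (\<Sum>B\<in>Pow P2. \<Sum>A\<in>Pow (P - B). (\<Prod>p\<in>A. - 1 / real p) * (\<Prod>p\<in>B. - (1 - 1 / real p)))"
  proof (intro sum.cong refl)
    fix B A assume "B \<in> Pow P2" "A \<in> Pow (P - B)"
    then have AB: "A \<subseteq> P" "B \<subseteq> P" using P2P by auto
    show "hh (\<Prod>A) (\<Prod>B) = (\<Prod>p\<in>A. - 1 / real p) * (\<Prod>p\<in>B. - (1 - 1 / real p))"
      using AB prP by (intro hh_prod) (auto intro: finite_subset[OF _ finP])
  qed
  also have "\<dots> = (\<Prod>p\<in>P. 1 + (- 1 / real p) + (if p \<in> P2 then - (1 - 1 / real p) else 0))"
    by (rule pair_sum_prod[OF finP P2P])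
  finally have S: "(\<Sum>(a,b)\<in>{(a,b)\<in>II. a * b^2 dvd n}. hh a b)
     = (\<Prod>p\<in>P. 1 + (- 1 / real p) + (if p \<in> P2 then - (1 - 1 / real p) else 0))" .
  show ?thesis
  proof (cases "squarefree n")
    case True
    have "P2 = {}"
    proof (rule ccontr)
      assume "P2 \<noteq> {}"
      then obtain p where "p \<in> P" "p^2 dvd n" by (auto simp: P2_def)
      then have "prime p" "p^2 dvd n" by (auto simp: P_def)
      then have "p dvd 1" "prime p" using True squarefreeD[of n p] by auto
      then show False by (simp add: prime_nat_iff)
    qed
    then have "(\<Sum>(a,b)\<in>{(a,b)\<in>II. a * b^2 dvd n}. hh a b) = (\<Prod>p\<in>P. 1 - 1 / real p)"
      using S by simp
    then show ?thesis using True totient_formula2[of n] by (simp add: P_def)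
  next
    case False
    then obtain x where x: "x^2 dvd n" "\<not> x dvd 1" using assms
      by (metis squarefreeI)
    then have "x \<noteq> 1" by auto
    then obtain q where q: "prime q" "q dvd x"
      by (metis prime_factor_nat)
    then have "q^2 dvd n" using x by (meson dvd_power_same dvd_trans)
    then have qP2: "q \<in> P2" using q assms
      by (auto simp: P2_def P_def in_prime_factors_iff intro: dvd_trans[OF dvd_power[of 2 q]])
    have "(\<Prod>p\<in>P. 1 + (- 1 / real p) + (if p \<in> P2 then - (1 - 1 / real p) else 0)) = 0"
      using qP2 P2P finP by (intro prod_zero) (auto intro!: bexI[of _ q])
    then show ?thesis using S False by simp
  qed
qed




lemma key_ineq32:
  fixes n :: real
  assumes "n \<ge> 1"
  shows "1 / ((n+1) * sqrt (n+1)) \<le> 2 / sqrt n - 2 / sqrt (n+1)"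
proof -
  define s where "s = sqrt n"
  define t where "t = sqrt (n+1)"
  have s0: "s > 0" using assms by (simp add: s_def)
  have st: "s \<le> t" by (simp add: s_def t_def)
  have t0: "t > 0" using s0 st by simp
  have s2: "s^2 = n" using assms by (simp add: s_def)
  have t2: "t^2 = n + 1" using assms by (simp add: t_def)
  have e1: "2*t^2*(t-s) - t*(t+s)*(t-s) = t*(t-s)^2" by (simp add: algebra_simps power2_eq_square)
  have e2: "t*(t+s)*(t-s) = t" using s2 t2 by (simp add: algebra_simps power2_eq_square)
  have "t*(t-s)^2 \<ge> 0" using t0 by simp
  then have k: "2*t^2*(t-s) - s \<ge> 0" using e1 e2 st by linarith
  have "2/s - 2/t - 1/(t^2*t) = (2*t^2*(t-s) - s)/(s*t^3)"
    using s0 t0 by (simp add: field_simps power2_eq_square power3_eq_cube)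
  also have "\<dots> \<ge> 0" using k s0 t0 by simp
  finally have "1/(t^2*t) \<le> 2/s - 2/t" by simp
  then show ?thesis using t2 by (simp add: s_def t_def)
qed

lemma sum32_aux:
  assumes "n \<ge> 1"
  shows "(\<Sum>a\<in>{1..n}. 1 / (real a * sqrt (real a))) \<le> 3 - 2 / sqrt (real n)"
  using assms
proof (induction n rule: nat_induct_at_least)
  case base
  then show ?case by simp
next
  case (Suc n)
  have "(\<Sum>a\<in>{1..Suc n}. 1 / (real a * sqrt (real a)))
      = (\<Sum>a\<in>{1..n}. 1 / (real a * sqrt (real a))) + 1 / (real (Suc n) * sqrt (real (Suc n)))"
    by simp
  also have "\<dots> \<le> 3 - 2 / sqrt (real n) + (2 / sqrt (real n) - 2 / sqrt (real n + 1))"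
    using Suc key_ineq32[of "real n"] by (intro add_mono) (auto simp: add.commute)
  finally show ?case by (simp add: add.commute)
qed

lemma sum32: "(\<Sum>a\<in>{1..n}. 1 / (real a * sqrt (real a))) \<le> 3"
proof (cases "n \<ge> 1")
  case True
  have "0 \<le> 2 / sqrt (real n)" by simp
  then show ?thesis using sum32_aux[OF True] by linarith
next
  case False
  then show ?thesis by simp
qed

lemma tel_aux:
  assumes "m \<ge> 1" "N \<ge> m"
  shows "(\<Sum>b\<in>{m<..N}. 1 / (real b)^2) \<le> 1 / real m - 1 / real N"
  using assms(2)
proof (induction N rule: nat_induct_at_least)
  case base
  then show ?case by simp
next
  case (Suc N)
  have N1: "real N \<ge> 1" using Suc assms by simp
  have "{m<..Suc N} = insert (Suc N) {m<..N}" using Suc by auto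
  then have "(\<Sum>b\<in>{m<..Suc N}. 1 / (real b)^2) = (\<Sum>b\<in>{m<..N}. 1 / (real b)^2) + 1 / (real N + 1)^2"
    by simp
  also have "\<dots> \<le> 1 / real m - 1 / real N + (1 / real N - 1 / (real N + 1))"
  proof (intro add_mono Suc.IH)
    have "1 / real N - 1 / (real N + 1) = 1 / (real N * (real N + 1))"
      using N1 by (simp add: field_simps)
    also have "\<dots> \<ge> 1 / (real N + 1)^2"
      using N1 by (intro divide_left_mono) (auto simp: power2_eq_square intro: mult_right_mono)
    finally show "1 / (real N + 1)^2 \<le> 1 / real N - 1 / (real N + 1)" .
  qed
  finally show ?case by (simp add: add.commute)
qed

lemma tel:
  assumes "m \<ge> 1"
  shows "(\<Sum>b\<in>{m<..N}. 1 / (real b)^2) \<le> 1 / real m"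
proof (cases "N \<ge> m")
  case True
  have "0 \<le> 1 / real N" by simp
  then show ?thesis using tel_aux[OF assms True] by linarith
next
  case False
  then have "{m<..N} = {}" by auto
  then show ?thesis by simp
qed

lemma sum_inv_sq_le2: "(\<Sum>b\<in>{1..N}. 1 / (real b)^2) \<le> 2"
proof (cases "N \<ge> 1")
  case True
  have "{1..N} = insert 1 {1<..N}" using True by auto
  then have "(\<Sum>b\<in>{1..N}. 1 / (real b)^2) = 1 + (\<Sum>b\<in>{1<..N}. 1 / (real b)^2)" by simp
  also have "\<dots> \<le> 1 + 1" using tel[of 1 N] by simp
  finally show ?thesis by simp
next
  case False
  then show ?thesis by simp
qed

lemma tail_bound:
  fixes x :: real
  assumes "x > 0"
  shows "(\<Sum>b\<in>{b\<in>{1..N}. x < real b}. 1 / (real b)^2) \<le> 2 / x"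
proof (cases "x < 1")
  case True
  have "(\<Sum>b\<in>{b\<in>{1..N}. x < real b}. 1 / (real b)^2) \<le> (\<Sum>b\<in>{1..N}. 1 / (real b)^2)"
    by (intro sum_mono2) auto
  also have "\<dots> \<le> 2" by (rule sum_inv_sq_le2)
  also have "2 \<le> 2 / x" using True assms by (simp add: field_simps)
  finally show ?thesis .
next
  case False
  define m where "m = nat \<lfloor>x\<rfloor>"
  have m1: "m \<ge> 1" using False by (simp add: m_def le_nat_floor)
  have mx: "real m \<le> x" "x < real m + 1" using False by (auto simp: m_def)
  have "{b\<in>{1..N}. x < real b} = {m<..N}"
  proof (intro equalityI subsetI)
    fix b assume "b \<in> {b\<in>{1..N}. x < real b}"
    then have "b \<le> N" "x < real b" by auto
    then have "m < b" using mx by linarith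
    then show "b \<in> {m<..N}" using \<open>b \<le> N\<close> by auto
  next
    fix b assume "b \<in> {m<..N}"
    then have "m + 1 \<le> b" "b \<le> N" by auto
    then have "x < real b" using mx by linarith
    then show "b \<in> {b\<in>{1..N}. x < real b}" using \<open>b \<le> N\<close> \<open>m + 1 \<le> b\<close> by auto
  qed
  then have "(\<Sum>b\<in>{b\<in>{1..N}. x < real b}. 1 / (real b)^2) = (\<Sum>b\<in>{m<..N}. 1 / (real b)^2)" by simp
  also have "\<dots> \<le> 1 / real m" by (rule tel[OF m1])
  also have "\<dots> \<le> 2 / x"
  proof -
    have "x \<le> 2 * real m" using mx m1 by linarith
    then show ?thesis using m1 assms by (simp add: field_simps)
  qed
  finally show ?thesis .
qed

lemma B1:
  fixes Q :: nat
  assumes "F \<subseteq> {(a,b). 1 \<le> a \<and> 1 \<le> b \<and> a * b^2 \<le> Q}"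
  shows "(\<Sum>(a,b)\<in>F. 1 / real a) \<le> 3 * sqrt (real Q)"
proof -
  define Box where "Box = (SIGMA a:{1..Q}. {b\<in>{1..Q}. a * b^2 \<le> Q})"
  have sub: "F \<subseteq> Box"
  proof
    fix x assume "x \<in> F"
    then obtain a b where x: "x = (a,b)" "1 \<le> a" "1 \<le> b" "a * b^2 \<le> Q" using assms by auto
    have aa: "a \<le> a * b^2" using x by simp
    have bb: "b \<le> a * b^2"
    proof -
      have "b \<le> b^2" using x by (simp add: power2_eq_square)
      also have "\<dots> \<le> a * b^2" using x by simp
      finally show ?thesis .
    qed
    have "a \<le> Q" "b \<le> Q" using aa bb x(4) by linarith+
    then show "x \<in> Box" using x by (auto simp: Box_def)
  qed
  have "(\<Sum>(a,b)\<in>F. 1 / real a) \<le> (\<Sum>(a,b)\<in>Box. 1 / real a)"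
    using sub by (intro sum_mono2) (auto simp: Box_def)
  also have "\<dots> = (\<Sum>a\<in>{1..Q}. \<Sum>b\<in>{b\<in>{1..Q}. a * b^2 \<le> Q}. 1 / real a)"
    unfolding Box_def by (subst sum.Sigma) auto
  also have "\<dots> \<le> (\<Sum>a\<in>{1..Q}. sqrt (real Q) * (1 / (real a * sqrt (real a))))"
  proof (intro sum_mono)
    fix a assume a: "a \<in> {1..Q}"
    define y where "y = sqrt (real Q / real a)"
    have "{b\<in>{1..Q}. a * b^2 \<le> Q} \<subseteq> {1..nat \<lfloor>y\<rfloor>}"
    proof
      fix b assume b: "b \<in> {b\<in>{1..Q}. a * b^2 \<le> Q}"
      then have "real a * (real b)^2 \<le> real Q" by (metis (mono_tags, lifting) mem_Collect_eq of_nat_le_iff of_nat_mult of_nat_power)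
      then have "(real b)^2 \<le> real Q / real a" using a by (simp add: field_simps)
      then have "sqrt ((real b)^2) \<le> y" unfolding y_def by (rule real_sqrt_le_mono)
      then have "real b \<le> y" by simp
      then show "b \<in> {1..nat \<lfloor>y\<rfloor>}" using b by (auto simp: le_nat_floor)
    qed
    then have "card {b\<in>{1..Q}. a * b^2 \<le> Q} \<le> nat \<lfloor>y\<rfloor>"
      by (metis card_atLeastAtMost card_mono diff_Suc_1 finite_atLeastAtMost)
    then have c0: "real (card {b\<in>{1..Q}. a * b^2 \<le> Q}) \<le> real (nat \<lfloor>y\<rfloor>)" by simp
    have y0: "y \<ge> 0" by (simp add: y_def)
    have "real (nat \<lfloor>y\<rfloor>) = of_int \<lfloor>y\<rfloor>" using y0 by (simp add: of_nat_nat)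
    also have "\<dots> \<le> y" by simp
    finally have c: "real (card {b\<in>{1..Q}. a * b^2 \<le> Q}) \<le> y" using c0 by linarith
    have "(\<Sum>b\<in>{b\<in>{1..Q}. a * b^2 \<le> Q}. 1 / real a) = real (card {b\<in>{1..Q}. a * b^2 \<le> Q}) * (1 / real a)"
      by simp
    also have "\<dots> \<le> y * (1 / real a)" using c by (intro mult_right_mono) auto
    also have "\<dots> = sqrt (real Q) * (1 / (real a * sqrt (real a)))"
      using a by (simp add: y_def real_sqrt_divide field_simps)
    finally show "(\<Sum>b\<in>{b\<in>{1..Q}. a * b^2 \<le> Q}. 1 / real a) \<le> sqrt (real Q) * (1 / (real a * sqrt (real a)))" .
  qed
  also have "\<dots> = sqrt (real Q) * (\<Sum>a\<in>{1..Q}. 1 / (real a * sqrt (real a)))"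
    by (simp add: sum_distrib_left)
  also have "\<dots> \<le> sqrt (real Q) * 3" by (intro mult_left_mono sum32) auto
  finally show ?thesis by simp
qed

lemma B2:
  fixes Q :: nat
  assumes "finite F" "F \<subseteq> {(a,b). 1 \<le> a \<and> 1 \<le> b \<and> Q < a * b^2}" "Q \<ge> 1"
  shows "(\<Sum>(a,b)\<in>F. 1 / ((real a)^2 * (real b)^2)) \<le> 6 / sqrt (real Q)"
proof -
  obtain N where N: "fst ` F \<union> snd ` F \<subseteq> {..<N}"
    using assms(1) finite_nat_bounded[of "fst ` F \<union> snd ` F"] by auto
  define Box where "Box = (SIGMA a:{1..N}. {b\<in>{1..N}. Q < a * b^2})"
  have sub: "F \<subseteq> Box"
  proof
    fix x assume "x \<in> F"
    then obtain a b where x: "x = (a,b)" "1 \<le> a" "1 \<le> b" "Q < a * b^2" using assms by auto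
    have "a < N" "b < N" using N \<open>x \<in> F\<close> x by (auto simp: image_iff)
    then show "x \<in> Box" using x by (auto simp: Box_def)
  qed
  have "(\<Sum>(a,b)\<in>F. 1 / ((real a)^2 * (real b)^2)) \<le> (\<Sum>(a,b)\<in>Box. 1 / ((real a)^2 * (real b)^2))"
    using sub by (intro sum_mono2) (auto simp: Box_def)
  also have "\<dots> = (\<Sum>a\<in>{1..N}. \<Sum>b\<in>{b\<in>{1..N}. Q < a * b^2}. 1 / ((real a)^2 * (real b)^2))"
    unfolding Box_def by (subst sum.Sigma) auto
  also have "\<dots> \<le> (\<Sum>a\<in>{1..N}. (2 / sqrt (real Q)) * (1 / (real a * sqrt (real a))))"
  proof (intro sum_mono)
    fix a assume a: "a \<in> {1..N}"
    define x where "x = sqrt (real Q / real a)"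
    have x0: "x > 0" using a assms by (simp add: x_def)
    have "{b\<in>{1..N}. Q < a * b^2} = {b\<in>{1..N}. x < real b}"
    proof (intro Collect_cong conj_cong refl)
      fix b :: nat
      have "Q < a * b^2 \<longleftrightarrow> real Q < real a * (real b)^2"
        by (metis of_nat_less_iff of_nat_mult of_nat_power)
      also have "\<dots> \<longleftrightarrow> real Q / real a < (real b)^2" using a by (simp add: field_simps)
      also have "\<dots> \<longleftrightarrow> x < sqrt ((real b)^2)" unfolding x_def by (rule real_sqrt_less_iff[symmetric])
      also have "\<dots> \<longleftrightarrow> x < real b" by simp
      finally show "Q < a * b^2 \<longleftrightarrow> x < real b" .
    qed
    then have "(\<Sum>b\<in>{b\<in>{1..N}. Q < a * b^2}. 1 / ((real a)^2 * (real b)^2))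
        = (1 / (real a)^2) * (\<Sum>b\<in>{b\<in>{1..N}. x < real b}. 1 / (real b)^2)"
      by (simp add: sum_distrib_left)
    also have "\<dots> \<le> (1 / (real a)^2) * (2 / x)"
      by (intro mult_left_mono tail_bound x0) auto
    also have "\<dots> = (2 / sqrt (real Q)) * (1 / (real a * sqrt (real a)))"
    proof -
      have sa: "sqrt (real a) > 0" "(sqrt (real a))^2 = real a" using a by auto
      have sq: "sqrt (real Q) > 0" using assms by simp
      show ?thesis unfolding x_def real_sqrt_divide using sa sq
        by (simp add: field_simps power2_eq_square)
    qed
    finally show "(\<Sum>b\<in>{b\<in>{1..N}. Q < a * b^2}. 1 / ((real a)^2 * (real b)^2))
                \<le> (2 / sqrt (real Q)) * (1 / (real a * sqrt (real a)))" .
  qed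
  also have "\<dots> = (2 / sqrt (real Q)) * (\<Sum>a\<in>{1..N}. 1 / (real a * sqrt (real a)))"
    by (simp add: sum_distrib_left)
  also have "\<dots> \<le> (2 / sqrt (real Q)) * 3" by (intro mult_left_mono sum32) auto
  finally show ?thesis by simp
qed




definition JJ :: "nat \<Rightarrow> (nat \<times> nat) set" where
  "JJ Q = {(a,b)\<in>II. a * b^2 \<le> Q}"

definition Ssum :: "nat \<Rightarrow> real" where
  "Ssum Q = (\<Sum>n\<in>{1..Q}. if squarefree n then real (totient n) else 0)"

definition cQ :: "nat \<Rightarrow> real" where
  "cQ Q = (\<Sum>(a,b)\<in>JJ Q. hh a b / (real a * (real b)^2))"

lemma JJ_sub: "JJ Q \<subseteq> {..Q} \<times> {..Q}"
proof
  fix x assume "x \<in> JJ Q"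
  then obtain a b where x: "x = (a,b)" "squarefree a" "squarefree b" "a * b^2 \<le> Q"
    by (auto simp: JJ_def II_def)
  have "a \<ge> 1" "b \<ge> 1" using x sqf_pos by (auto simp: Suc_le_eq)
  have b2: "1 \<le> b^2" using \<open>b \<ge> 1\<close> by simp
  have "a * 1 \<le> a * b^2" using b2 by (rule mult_le_mono2)
  then have aa: "a \<le> a * b^2" by simp
  have "b * 1 \<le> b * b" using \<open>b \<ge> 1\<close> by (rule mult_le_mono2)
  also have "\<dots> = 1 * b^2" by (simp add: power2_eq_square)
  also have "\<dots> \<le> a * b^2" using \<open>a \<ge> 1\<close> by (rule mult_le_mono1)
  finally have "b \<le> a * b^2" by simp
  then have "a \<le> Q" "b \<le> Q" using aa x(4) by linarith+
  then show "x \<in> {..Q} \<times> {..Q}" using x by auto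
qed

lemma finite_JJ: "finite (JJ Q)"
  using JJ_sub finite_subset by blast

lemma hh_bound:
  assumes "squarefree a"
  shows "\<bar>hh a b\<bar> \<le> 1 / real a"
proof -
  have "\<bar>(\<Prod>p\<in>prime_factors a. - 1 / real p)\<bar> = (\<Prod>p\<in>prime_factors a. 1 / real p)"
    by (simp add: abs_prod)
  also have "\<dots> = 1 / real (\<Prod>(prime_factors a))"
    by (simp add: prod_dividef)
  also have "\<dots> = 1 / real a" using sqf_prod_pf[OF assms] by simp
  finally have 1: "\<bar>(\<Prod>p\<in>prime_factors a. - 1 / real p)\<bar> = 1 / real a" .
  have "\<bar>(\<Prod>p\<in>prime_factors b. - (1 - 1 / real p))\<bar> = (\<Prod>p\<in>prime_factors b. \<bar>- (1 - 1 / real p)\<bar>)"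
    by (rule abs_prod)
  also have "\<dots> \<le> (\<Prod>p\<in>prime_factors b. 1)"
  proof (intro prod_mono conjI)
    fix p assume "p \<in> prime_factors b"
    then have "real p \<ge> 1" by (auto simp: in_prime_factors_iff prime_ge_1_nat Suc_le_eq prime_gt_0_nat)
    then show "\<bar>- (1 - 1 / real p)\<bar> \<le> 1" by (simp add: field_simps)
  qed simp
  finally have 2: "\<bar>(\<Prod>p\<in>prime_factors b. - (1 - 1 / real p))\<bar> \<le> 1" by simp
  have "\<bar>hh a b\<bar> = (1 / real a) * \<bar>(\<Prod>p\<in>prime_factors b. - (1 - 1 / real p))\<bar>"
    unfolding hh_def abs_mult 1 ..
  also have "\<dots> \<le> (1 / real a) * 1" by (intro mult_left_mono 2) simp
  finally show ?thesis by simp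
qed

lemma sum_if_mult:
  fixes f :: "nat \<Rightarrow> real"
  shows "(\<Sum>n\<in>{1..Q}. if P n then f n * c else 0) = c * (\<Sum>n\<in>{n\<in>{1..Q}. P n}. f n)"
proof -
  have "(\<Sum>n\<in>{1..Q}. if P n then f n * c else 0) = (\<Sum>n\<in>{1..Q}. c * (if P n then f n else 0))"
    by (rule sum.cong) auto
  also have "\<dots> = c * (\<Sum>n\<in>{1..Q}. if P n then f n else 0)" by (simp add: sum_distrib_left)
  also have "\<dots> = c * (\<Sum>n\<in>{n\<in>{1..Q}. P n}. f n)" by (simp only: sum.inter_filter[OF finite_atLeastAtMost])
  finally show ?thesis .
qed

lemma gauss_real: "(\<Sum>k\<in>{1..m}. real k) = real m * (real m + 1) / 2"
  by (induction m) (auto simp: field_simps)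

lemma mult_sum:
  assumes "d \<ge> 1"
  shows "(\<Sum>n\<in>{n\<in>{1..Q}. d dvd n}. real n) = real d * (real (Q div d) * (real (Q div d) + 1) / 2)"
proof -
  have eq: "{n\<in>{1..Q}. d dvd n} = (\<lambda>k. d * k) ` {1..Q div d}"
  proof (intro equalityI subsetI)
    fix n assume "n \<in> {n\<in>{1..Q}. d dvd n}"
    then have "d dvd n" "1 \<le> n" "n \<le> Q" by auto
    then obtain k where n: "n = d * k" "1 \<le> n" "n \<le> Q" by (auto elim: dvdE)
    then have "k \<ge> 1" by (cases k) auto
    moreover have "k \<le> Q div d" using n assms
      by (metis div_le_mono nonzero_mult_div_cancel_left not_one_le_zero)
    ultimately show "n \<in> (\<lambda>k. d * k) ` {1..Q div d}" using n by auto
  next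
    fix n assume "n \<in> (\<lambda>k. d * k) ` {1..Q div d}"
    then obtain k where k: "k \<in> {1..Q div d}" "n = d * k" by blast
    then have n: "n = d * k" "1 \<le> k" "k \<le> Q div d" by auto
    have "d * k \<le> d * (Q div d)" using n by simp
    also have "\<dots> \<le> Q" by simp
    finally have "n \<le> Q" using n by simp
    moreover have "n \<ge> 1" using n assms by simp
    ultimately show "n \<in> {n\<in>{1..Q}. d dvd n}" using n by auto
  qed
  have inj: "inj_on (\<lambda>k. d * k) {1..Q div d}" using assms by (auto simp: inj_on_def)
  have "(\<Sum>n\<in>{n\<in>{1..Q}. d dvd n}. real n) = (\<Sum>k\<in>{1..Q div d}. real (d * k))"
    unfolding eq by (subst sum.reindex[OF inj]) (simp add: comp_def)
  also have "\<dots> = real d * (\<Sum>k\<in>{1..Q div d}. real k)" by (simp add: sum_distrib_left)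
  also have "\<dots> = real d * (real (Q div d) * (real (Q div d) + 1) / 2)" by (simp only: gauss_real)
  finally show ?thesis .
qed

lemma err_bound:
  assumes "1 \<le> d" "d \<le> Q"
  shows "\<bar>real d * (real (Q div d) * (real (Q div d) + 1) / 2) - (real Q)^2 / (2 * real d)\<bar> \<le> real Q"
proof -
  define m where "m = real (Q div d)"
  define r where "r = real (Q mod d)"
  define D where "D = real d"
  have "Q = d * (Q div d) + Q mod d" by simp
  then have "real Q = real (d * (Q div d) + Q mod d)" by (rule arg_cong)
  then have QD: "real Q = D * m + r" unfolding m_def r_def D_def by (simp only: of_nat_add of_nat_mult)
  have r0: "0 \<le> r" unfolding r_def by simp
  have "Q mod d < d" using assms by simp
  then have rD: "r \<le> D" unfolding r_def D_def by simp
  have m0: "m \<ge> 0" by (simp add: m_def)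
  have D1: "D \<ge> 1" using assms by (simp add: D_def)
  have key: "2 * D * (D * (m * (m + 1) / 2) - (D * m + r)^2 / (2 * D)) = D*D*m - 2*(D*m*r) - r*r"
    using D1 by (simp add: field_simps power2_eq_square)
  have e1: "2*D*(D*m + r) - (D*D*m - 2*(D*m*r) - r*r) = D*D*m + 2*(D*r) + 2*(D*m*r) + r*r"
    by (simp add: algebra_simps)
  have "D*D*m + 2*(D*r) + 2*(D*m*r) + r*r \<ge> 0" using D1 m0 r0 by simp
  then have up: "D*D*m - 2*(D*m*r) - r*r \<le> 2*D*(D*m + r)" using e1 by linarith
  have e2: "(D*D*m - 2*(D*m*r) - r*r) + 2*D*(D*m + r) = D*m*(3*D - 2*r) + r*(2*D - r)"
    by (simp add: algebra_simps)
  have "D*m*(3*D - 2*r) \<ge> 0" "r*(2*D - r) \<ge> 0" using D1 m0 r0 rD by simp_all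
  then have lo: "- (2*D*(D*m + r)) \<le> D*D*m - 2*(D*m*r) - r*r" using e2 by linarith
  have "\<bar>2 * D * (D * (m * (m + 1) / 2) - (D * m + r)^2 / (2 * D))\<bar> \<le> 2 * D * (D * m + r)"
    unfolding key using up lo by linarith
  then have "2 * D * \<bar>D * (m * (m + 1) / 2) - (D * m + r)^2 / (2 * D)\<bar> \<le> 2 * D * (D * m + r)"
    using D1 by (simp add: abs_mult)
  then have "\<bar>D * (m * (m + 1) / 2) - (D * m + r)^2 / (2 * D)\<bar> \<le> D * m + r"
    using D1 by simp
  then show ?thesis using QD by (simp add: m_def D_def)
qed

lemma Ssum_expand:
  assumes "Q \<ge> 1"
  shows "Ssum Q = (\<Sum>(a,b)\<in>JJ Q. hh a b * (real (a * b^2) * (real (Q div (a * b^2)) * (real (Q div (a * b^2)) + 1) / 2)))"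
proof -
  have "Ssum Q = (\<Sum>n\<in>{1..Q}. real n * (\<Sum>(a,b)\<in>{(a,b)\<in>II. a * b^2 dvd n}. hh a b))"
    unfolding Ssum_def by (intro sum.cong refl ID1) auto
  also have "\<dots> = (\<Sum>n\<in>{1..Q}. \<Sum>(a,b)\<in>JJ Q. if a * b^2 dvd n then real n * hh a b else 0)"
  proof (intro sum.cong refl)
    fix n assume n: "n \<in> {1..Q}"
    have "{(a,b)\<in>II. a * b^2 dvd n} = {x\<in>JJ Q. (\<lambda>(a,b). a * b^2 dvd n) x}"
      using n by (auto simp: JJ_def dest: dvd_imp_le)
    then have "(\<Sum>(a,b)\<in>{(a,b)\<in>II. a * b^2 dvd n}. hh a b)
        = (\<Sum>x\<in>JJ Q. if (\<lambda>(a,b). a * b^2 dvd n) x then (\<lambda>(a,b). hh a b) x else 0)"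
      by (simp add: sum.inter_filter[OF finite_JJ])
    then show "real n * (\<Sum>(a,b)\<in>{(a,b)\<in>II. a * b^2 dvd n}. hh a b)
        = (\<Sum>(a,b)\<in>JJ Q. if a * b^2 dvd n then real n * hh a b else 0)"
      by (simp add: sum_distrib_left case_prod_beta) (rule sum.cong, auto)
  qed
  also have "\<dots> = (\<Sum>(a,b)\<in>JJ Q. \<Sum>n\<in>{1..Q}. if a * b^2 dvd n then real n * hh a b else 0)"
    by (subst sum.swap) (simp add: case_prod_unfold)
  also have "\<dots> = (\<Sum>(a,b)\<in>JJ Q. hh a b * (\<Sum>n\<in>{n\<in>{1..Q}. a * b^2 dvd n}. real n))"
  proof (intro sum.cong refl)
    fix x assume "x \<in> JJ Q"
    obtain a b where x: "x = (a,b)" by (cases x)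
    show "(case x of (a,b) \<Rightarrow> \<Sum>n\<in>{1..Q}. if a * b^2 dvd n then real n * hh a b else 0)
        = (case x of (a,b) \<Rightarrow> hh a b * (\<Sum>n\<in>{n\<in>{1..Q}. a * b^2 dvd n}. real n))"
      unfolding x case_prod_conv by (rule sum_if_mult)
  qed
  also have "\<dots> = (\<Sum>(a,b)\<in>JJ Q. hh a b * (real (a * b^2) * (real (Q div (a * b^2)) * (real (Q div (a * b^2)) + 1) / 2)))"
  proof (intro sum.cong refl)
    fix x assume "x \<in> JJ Q"
    then obtain a b where x: "x = (a,b)" "squarefree a" "squarefree b" by (auto simp: JJ_def II_def)
    then have "a * b^2 \<ge> 1" using sqf_pos by (simp add: Suc_le_eq)
    then show "(case x of (a,b) \<Rightarrow> hh a b * (\<Sum>n\<in>{n\<in>{1..Q}. a * b^2 dvd n}. real n)) =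
        (case x of (a,b) \<Rightarrow> hh a b * (real (a * b^2) * (real (Q div (a * b^2)) * (real (Q div (a * b^2)) + 1) / 2)))"
      using x mult_sum by simp
  qed
  finally show ?thesis .
qed

lemma main_fin:
  assumes "Q \<ge> 1"
  shows "\<bar>Ssum Q - (real Q)^2 / 2 * cQ Q\<bar> \<le> 3 * real Q * sqrt (real Q)"
proof -
  have "Ssum Q - (real Q)^2 / 2 * cQ Q =
     (\<Sum>(a,b)\<in>JJ Q. hh a b * (real (a * b^2) * (real (Q div (a * b^2)) * (real (Q div (a * b^2)) + 1) / 2)
        - (real Q)^2 / (2 * real (a * b^2))))"
    unfolding Ssum_expand[OF assms] cQ_def
    by (simp add: sum_distrib_left sum_subtractf[symmetric] case_prod_unfold field_simps)
  also have "\<bar>\<dots>\<bar> \<le> (\<Sum>(a,b)\<in>JJ Q. (1 / real a) * real Q)"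
  proof (rule order_trans[OF sum_abs], intro sum_mono)
    fix x assume "x \<in> JJ Q"
    then obtain a b where x: "x = (a,b)" "squarefree a" "squarefree b" "a * b^2 \<le> Q" by (auto simp: JJ_def II_def)
    then have d1: "a * b^2 \<ge> 1" using sqf_pos by (simp add: Suc_le_eq)
    show "\<bar>case x of (a,b) \<Rightarrow> hh a b * (real (a * b^2) * (real (Q div (a * b^2)) * (real (Q div (a * b^2)) + 1) / 2)
        - (real Q)^2 / (2 * real (a * b^2)))\<bar> \<le> (case x of (a,b) \<Rightarrow> (1 / real a) * real Q)"
    proof -
      have "\<bar>hh a b * (real (a * b^2) * (real (Q div (a * b^2)) * (real (Q div (a * b^2)) + 1) / 2)
        - (real Q)^2 / (2 * real (a * b^2)))\<bar> \<le> (1 / real a) * real Q"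
        unfolding abs_mult by (intro mult_mono hh_bound err_bound d1 x) auto
      then show ?thesis using x by simp
    qed
  qed
  also have "\<dots> = real Q * (\<Sum>(a,b)\<in>JJ Q. 1 / real a)"
    by (simp add: sum_distrib_left case_prod_unfold mult.commute)
  also have "\<dots> \<le> real Q * (3 * sqrt (real Q))"
  proof (intro mult_left_mono B1)
    show "JJ Q \<subseteq> {(a,b). 1 \<le> a \<and> 1 \<le> b \<and> a * b^2 \<le> Q}"
      using sqf_pos by (auto simp: JJ_def II_def Suc_le_eq)
  qed simp
  finally show ?thesis by simp
qed




lemma tail_JJ:
  assumes "finite F" "F \<subseteq> II" "\<And>a b. (a,b) \<in> F \<Longrightarrow> Q < a * b^2" "Q \<ge> 1"
  shows "\<bar>\<Sum>(a,b)\<in>F. hh a b / (real a * (real b)^2)\<bar> \<le> 6 / sqrt (real Q)"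
proof -
  have "\<bar>\<Sum>(a,b)\<in>F. hh a b / (real a * (real b)^2)\<bar> \<le> (\<Sum>x\<in>F. \<bar>(\<lambda>(a,b). hh a b / (real a * (real b)^2)) x\<bar>)"
    by (rule sum_abs)
  also have "\<dots> \<le> (\<Sum>(a,b)\<in>F. 1 / ((real a)^2 * (real b)^2))"
  proof (rule sum_mono)
    fix x assume x: "x \<in> F"
    obtain a b where ab: "x = (a,b)" by (cases x)
    have sa: "squarefree a" "squarefree b" using x ab assms(2) by (auto simp: II_def)
    have a0: "real a > 0" "real b > 0" using sa sqf_pos by auto
    have "\<bar>hh a b / (real a * (real b)^2)\<bar> = \<bar>hh a b\<bar> / (real a * (real b)^2)"
      using a0 by (simp add: abs_div)
    also have "\<dots> \<le> (1 / real a) / (real a * (real b)^2)"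
      using a0 hh_bound[OF sa(1)] by (intro divide_right_mono) auto
    also have "\<dots> = 1 / ((real a)^2 * (real b)^2)" by (simp add: power2_eq_square)
    finally show "\<bar>(\<lambda>(a,b). hh a b / (real a * (real b)^2)) x\<bar> \<le> (\<lambda>(a,b). 1 / ((real a)^2 * (real b)^2)) x"
      using ab by simp
  qed
  also have "\<dots> \<le> 6 / sqrt (real Q)"
  proof (rule B2[OF assms(1) _ assms(4)])
    show "F \<subseteq> {(a,b). 1 \<le> a \<and> 1 \<le> b \<and> Q < a * b^2}"
      using assms(2,3) sqf_pos by (force simp: II_def Suc_le_eq)
  qed
  finally show ?thesis .
qed

lemma JJ_mono: "Q \<le> N \<Longrightarrow> JJ Q \<subseteq> JJ N"
  by (auto simp: JJ_def)

lemma cQ_diff: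
  assumes "Q \<ge> 1" "Q \<le> N"
  shows "\<bar>cQ N - cQ Q\<bar> \<le> 6 / sqrt (real Q)"
proof -
  have "cQ N - cQ Q = (\<Sum>(a,b)\<in>JJ N - JJ Q. hh a b / (real a * (real b)^2))"
    unfolding cQ_def using JJ_mono[OF assms(2)] finite_JJ by (simp add: sum_diff)
  also have "\<bar>\<dots>\<bar> \<le> 6 / sqrt (real Q)"
    by (rule tail_JJ) (use finite_JJ assms in \<open>auto simp: JJ_def\<close>)
  finally show ?thesis .
qed

lemma cQ_Cauchy: "Cauchy cQ"
proof (rule metric_CauchyI)
  fix e :: real assume e: "e > 0"
  define M where "M = nat \<lceil>(12 / e)^2\<rceil> + 1"
  have M1: "M \<ge> 1" by (simp add: M_def)
  have "(12 / e)^2 < real M" unfolding M_def by linarith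
  then have "12 / e < sqrt (real M)" by (rule real_less_rsqrt)
  then have Me: "12 / sqrt (real M) < e" using e M1 by (simp add: field_simps)
  have "\<forall>m\<ge>M. \<forall>n\<ge>M. dist (cQ m) (cQ n) < e"
  proof (intro allI impI)
    fix m n assume mn: "m \<ge> M" "n \<ge> M"
    have "dist (cQ m) (cQ n) \<le> \<bar>cQ m - cQ M\<bar> + \<bar>cQ n - cQ M\<bar>"
      by (simp add: dist_real_def)
    also have "\<dots> \<le> 6 / sqrt (real M) + 6 / sqrt (real M)"
      using cQ_diff[OF M1 mn(1)] cQ_diff[OF M1 mn(2)] by linarith
    also have "\<dots> < e" using Me by simp
    finally show "dist (cQ m) (cQ n) < e" .
  qed
  then show "\<exists>M. \<forall>m\<ge>M. \<forall>n\<ge>M. dist (cQ m) (cQ n) < e" by blast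
qed

definition CC :: real where "CC = lim cQ"

lemma cQ_lim: "cQ \<longlonglongrightarrow> CC"
  unfolding CC_def using cQ_Cauchy Cauchy_convergent_iff convergent_LIMSEQ_iff by blast

lemma CC_approx:
  assumes "Q \<ge> 1"
  shows "\<bar>CC - cQ Q\<bar> \<le> 6 / sqrt (real Q)"
proof -
  have "(\<lambda>N. \<bar>cQ N - cQ Q\<bar>) \<longlonglongrightarrow> \<bar>CC - cQ Q\<bar>"
    by (intro tendsto_intros cQ_lim)
  moreover have "\<exists>N. \<forall>n\<ge>N. \<bar>cQ n - cQ Q\<bar> \<le> 6 / sqrt (real Q)"
    using cQ_diff[OF assms] by blast
  ultimately show ?thesis by (rule LIMSEQ_le_const2)
qed

lemma main_asym:
  assumes "Q \<ge> 1"
  shows "\<bar>Ssum Q - (real Q)^2 / 2 * CC\<bar> \<le> 6 * real Q * sqrt (real Q)"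
proof -
  have sq: "sqrt (real Q) > 0" using assms by simp
  have "\<bar>(real Q)^2 / 2 * (cQ Q - CC)\<bar> = (real Q)^2 / 2 * \<bar>CC - cQ Q\<bar>"
    by (simp add: abs_mult abs_minus_commute)
  also have "\<dots> \<le> (real Q)^2 / 2 * (6 / sqrt (real Q))"
    by (intro mult_left_mono CC_approx assms) simp
  also have "\<dots> = 3 * real Q * sqrt (real Q)"
  proof -
    have "(real Q)^2 = real Q * (sqrt (real Q) * sqrt (real Q))" by (simp add: power2_eq_square)
    then show ?thesis using sq by (simp add: field_simps)
  qed
  finally have 2: "\<bar>(real Q)^2 / 2 * (cQ Q - CC)\<bar> \<le> 3 * real Q * sqrt (real Q)" .
  have "Ssum Q - (real Q)^2 / 2 * CC = (Ssum Q - (real Q)^2 / 2 * cQ Q) + (real Q)^2 / 2 * (cQ Q - CC)"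
    by (simp add: right_diff_distrib)
  then show ?thesis using main_fin[OF assms] 2 by linarith
qed

definition Pm :: "nat \<Rightarrow> nat set" where "Pm M = {p. prime p \<and> p \<le> M}"

definition KK :: "nat \<Rightarrow> (nat \<times> nat) set" where
  "KK M = {(a,b)\<in>II. prime_factors a \<subseteq> Pm M \<and> prime_factors b \<subseteq> Pm M}"

lemma Pm_fin: "finite (Pm M)" and Pm_prime: "\<forall>p\<in>Pm M. prime p"
  by (auto simp: Pm_def)

lemma KK_fin: "finite (KK M)"
proof -
  have "bij_betw (\<lambda>(B,A). (\<Prod>A, \<Prod>B)) (SIGMA B:Pow (Pm M). Pow (Pm M - B)) (KK M)"
    unfolding KK_def by (rule bridge_bij[OF Pm_fin Pm_prime subset_refl])
  moreover have "finite (SIGMA B:Pow (Pm M). Pow (Pm M - B))" using Pm_fin by auto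
  ultimately show ?thesis using bij_betw_finite by blast
qed

lemma JJ_KK: "JJ M \<subseteq> KK M"
proof
  fix x assume "x \<in> JJ M"
  then obtain a b where x: "x = (a,b)" "(a,b) \<in> II" "a * b^2 \<le> M" by (auto simp: JJ_def)
  have sa: "squarefree a" "squarefree b" using x by (auto simp: II_def)
  have "a \<le> M" "b \<le> M" using JJ_sub \<open>x \<in> JJ M\<close> x by auto
  have "prime_factors a \<subseteq> Pm M"
  proof
    fix p assume "p \<in> prime_factors a"
    then have "prime p" "p dvd a" by (auto simp: in_prime_factors_iff)
    then have "p \<le> a" using sqf_pos[OF sa(1)] by (simp add: dvd_imp_le)
    then show "p \<in> Pm M" using \<open>prime p\<close> \<open>a \<le> M\<close> by (simp add: Pm_def)
  qed
  moreover have "prime_factors b \<subseteq> Pm M"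
  proof
    fix p assume "p \<in> prime_factors b"
    then have "prime p" "p dvd b" by (auto simp: in_prime_factors_iff)
    then have "p \<le> b" using sqf_pos[OF sa(2)] by (simp add: dvd_imp_le)
    then show "p \<in> Pm M" using \<open>prime p\<close> \<open>b \<le> M\<close> by (simp add: Pm_def)
  qed
  ultimately show "x \<in> KK M" using x by (simp add: KK_def)
qed

lemma e_prod:
  "(\<Sum>(a,b)\<in>KK M. hh a b / (real a * (real b)^2))
     = (\<Prod>p\<in>Pm M. 1 + (- 1 / (real p)^2) + (- (1 - 1 / real p) / (real p)^2))"
proof -
  define f :: "nat \<Rightarrow> real" where "f p = - 1 / (real p)^2" for p
  define g :: "nat \<Rightarrow> real" where "g p = - (1 - 1 / real p) / (real p)^2" for p
  have "(\<Sum>(a,b)\<in>KK M. hh a b / (real a * (real b)^2))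
      = (\<Sum>B\<in>Pow (Pm M). \<Sum>A\<in>Pow (Pm M - B). hh (\<Prod>A) (\<Prod>B) / (real (\<Prod>A) * (real (\<Prod>B))^2))"
    unfolding KK_def by (rule bridge_sum[OF Pm_fin Pm_prime subset_refl])
  also have "\<dots> = (\<Sum>B\<in>Pow (Pm M). \<Sum>A\<in>Pow (Pm M - B). prod f A * prod g B)"
  proof (intro sum.cong refl)
    fix B A assume BA: "B \<in> Pow (Pm M)" "A \<in> Pow (Pm M - B)"
    have sAB: "A \<subseteq> Pm M" "B \<subseteq> Pm M" using BA by auto
    have fA: "finite A" "finite B" using sAB by (auto intro: finite_subset[OF _ Pm_fin])
    have pA: "\<forall>p\<in>A. prime p" "\<forall>p\<in>B. prime p" using BA Pm_prime by auto
    have "hh (\<Prod>A) (\<Prod>B) / (real (\<Prod>A) * (real (\<Prod>B))^2)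
       = ((\<Prod>p\<in>A. - 1 / real p) / (\<Prod>p\<in>A. real p)) * ((\<Prod>p\<in>B. - (1 - 1 / real p)) / (\<Prod>p\<in>B. (real p)^2))"
      using hh_prod[OF fA pA] by (simp add: of_nat_prod prod_power_distrib)
    also have "\<dots> = prod f A * prod g B"
      by (simp add: f_def g_def prod_dividef[symmetric] power2_eq_square)
    finally show "hh (\<Prod>A) (\<Prod>B) / (real (\<Prod>A) * (real (\<Prod>B))^2) = prod f A * prod g B" .
  qed
  also have "\<dots> = (\<Prod>p\<in>Pm M. 1 + f p + (if p \<in> Pm M then g p else 0))"
    by (rule pair_sum_prod[OF Pm_fin subset_refl])
  also have "\<dots> = (\<Prod>p\<in>Pm M. 1 + (- 1 / (real p)^2) + (- (1 - 1 / real p) / (real p)^2))"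
    by (intro prod.cong refl) (simp add: f_def g_def)
  finally show ?thesis .
qed

lemma e_lim:
  "(\<lambda>M. \<Prod>p\<in>Pm M. 1 + (- 1 / (real p)^2) + (- (1 - 1 / real p) / (real p)^2)) \<longlonglongrightarrow> CC"
proof -
  let ?e = "\<lambda>M. \<Prod>p\<in>Pm M. 1 + (- 1 / (real p)^2) + (- (1 - 1 / real p) / (real p)^2)"
  have b: "\<bar>?e M - cQ M\<bar> \<le> 6 / sqrt (real M)" if M: "M \<ge> 1" for M
  proof -
    have "?e M - cQ M = (\<Sum>(a,b)\<in>KK M - JJ M. hh a b / (real a * (real b)^2))"
      unfolding e_prod[symmetric] cQ_def using JJ_KK KK_fin by (simp add: sum_diff)
    also have "\<bar>\<dots>\<bar> \<le> 6 / sqrt (real M)"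
      by (rule tail_JJ) (use KK_fin M in \<open>auto simp: JJ_def KK_def\<close>)
    finally show ?thesis .
  qed
  have "(\<lambda>M. ?e M - cQ M) \<longlonglongrightarrow> 0"
  proof (rule Lim_null_comparison)
    show "\<forall>\<^sub>F M in sequentially. norm (?e M - cQ M) \<le> 6 / sqrt (real M)"
      using b by (auto simp: eventually_sequentially intro!: exI[of _ 1])
    show "(\<lambda>M. 6 / sqrt (real M)) \<longlonglongrightarrow> 0" by real_asymp
  qed
  then have "(\<lambda>M. (?e M - cQ M) + cQ M) \<longlonglongrightarrow> 0 + CC"
    by (intro tendsto_add cQ_lim)
  then show ?thesis by simp
qed




definition zeta2 :: real where "zeta2 = pi^2 / 6"

lemma inv_sq_sums: "(\<lambda>n. 1 / (real n)^2) sums zeta2"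
proof -
  have "(\<lambda>n. 1 / (real (Suc n))^2) sums zeta2"
    using inverse_squares_sums unfolding zeta2_def by (simp add: add.commute)
  then show ?thesis by (subst (asm) sums_Suc_iff) simp
qed

lemma mult_sums:
  assumes "d > 0"
  shows "(\<lambda>m. if d dvd m then 1 / (real m)^2 else 0) sums (zeta2 / (real d)^2)"
proof -
  have sm: "strict_mono (\<lambda>n. d * n)" using assms by (auto simp: strict_mono_def)
  have "(\<lambda>n. (1 / (real d)^2) * (1 / (real n)^2)) sums ((1 / (real d)^2) * zeta2)"
    by (rule sums_mult[OF inv_sq_sums])
  then have "(\<lambda>n. (\<lambda>m. if d dvd m then 1 / (real m)^2 else 0) (d * n)) sums (zeta2 / (real d)^2)"
    by (simp add: power_mult_distrib)
  then show ?thesis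
    by (subst (asm) sums_mono_reindex[OF sm]) (auto elim!: dvdE)
qed

lemma sum_pow_neg1: "finite X \<Longrightarrow> (\<Sum>B\<in>Pow X. (-1::real)^card B) = (if X = {} then 1 else 0)"
proof -
  assume X: "finite X"
  have "(\<Prod>x\<in>X. (-1::real) + 1) = (\<Sum>B\<in>Pow X. (\<Prod>p\<in>B. (-1::real)) * (\<Prod>p\<in>X - B. 1))"
    by (rule prod_add[OF X])
  then have "(\<Sum>B\<in>Pow X. (-1::real)^card B) = (\<Prod>x\<in>X. (0::real))" by simp
  then show ?thesis using X by (simp add: prod_zero_iff card_gt_0_iff)
qed

definition Pm' :: "nat \<Rightarrow> nat set" where "Pm' M = {p. prime p \<and> p \<le> M}"

lemma Pm'_fin: "finite (Pm' M)" and Pm'_prime: "\<forall>p\<in>Pm' M. prime p"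
  by (auto simp: Pm'_def)

lemma sieve_point:
  assumes "m > 0"
  shows "(\<Sum>B\<in>Pow (Pm' M). (-1::real)^card B * (if \<Prod>B dvd m then 1 / (real m)^2 else 0))
       = (if Pm' M \<inter> prime_factors m = {} then 1 / (real m)^2 else 0)"
proof -
  have "(\<Sum>B\<in>Pow (Pm' M). (-1::real)^card B * (if \<Prod>B dvd m then 1 / (real m)^2 else 0))
      = (\<Sum>B\<in>{B\<in>Pow (Pm' M). \<Prod>B dvd m}. (-1::real)^card B) * (1 / (real m)^2)"
  proof -
    have "(\<Sum>B\<in>Pow (Pm' M). (-1::real)^card B * (if \<Prod>B dvd m then 1 / (real m)^2 else 0))
        = (\<Sum>B\<in>Pow (Pm' M). (if \<Prod>B dvd m then (-1::real)^card B else 0) * (1 / (real m)^2))"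
      by (rule sum.cong) auto
    also have "\<dots> = (\<Sum>B\<in>Pow (Pm' M). (if \<Prod>B dvd m then (-1::real)^card B else 0)) * (1 / (real m)^2)"
      by (rule sum_distrib_right[symmetric])
    also have "\<dots> = (\<Sum>B\<in>{B\<in>Pow (Pm' M). \<Prod>B dvd m}. (-1::real)^card B) * (1 / (real m)^2)"
      using Pm'_fin by (simp only: sum.inter_filter finite_Pow_iff)
    finally show ?thesis .
  qed
  also have "{B\<in>Pow (Pm' M). \<Prod>B dvd m} = Pow (Pm' M \<inter> prime_factors m)"
  proof (intro equalityI subsetI)
    fix B assume "B \<in> {B\<in>Pow (Pm' M). \<Prod>B dvd m}"
    then have B: "B \<subseteq> Pm' M" "\<Prod>B dvd m" by auto
    have fB: "finite B" "\<forall>p\<in>B. prime p" using B(1) Pm'_prime by (auto intro: finite_subset[OF _ Pm'_fin])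
    have "prime_factors (\<Prod>B) \<subseteq> prime_factors m"
      using sqf_dvd_iff[OF sqf_prod_primes[OF fB(2)]] B assms by auto
    then show "B \<in> Pow (Pm' M \<inter> prime_factors m)" using pf_prod_primes[OF fB] B by auto
  next
    fix B assume "B \<in> Pow (Pm' M \<inter> prime_factors m)"
    then have B: "B \<subseteq> Pm' M" "B \<subseteq> prime_factors m" by auto
    have fB: "finite B" "\<forall>p\<in>B. prime p" using B(1) Pm'_prime by (auto intro: finite_subset[OF _ Pm'_fin])
    have "\<Prod>B dvd m"
      using sqf_dvd_iff[OF sqf_prod_primes[OF fB(2)]] B assms pf_prod_primes[OF fB] by auto
    then show "B \<in> {B\<in>Pow (Pm' M). \<Prod>B dvd m}" using B by auto
  qed
  also have "(\<Sum>B\<in>Pow (Pm' M \<inter> prime_factors m). (-1::real)^card B) = (if Pm' M \<inter> prime_factors m = {} then 1 else 0)"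
    by (rule sum_pow_neg1) (simp add: Pm'_fin)
  finally show ?thesis by simp
qed

definition TT :: "nat \<Rightarrow> real" where "TT M = (\<Prod>p\<in>Pm' M. 1 - 1 / (real p)^2)"

lemma TT_expand: "TT M = (\<Sum>B\<in>Pow (Pm' M). (-1::real)^card B / (real (\<Prod>B))^2)"
proof -
  have "TT M = (\<Prod>p\<in>Pm' M. (- 1 / (real p)^2) + 1)" unfolding TT_def by (simp add: algebra_simps)
  also have "\<dots> = (\<Sum>B\<in>Pow (Pm' M). (\<Prod>p\<in>B. - 1 / (real p)^2) * (\<Prod>p\<in>Pm' M - B. 1))"
    by (rule prod_add[OF Pm'_fin])
  also have "\<dots> = (\<Sum>B\<in>Pow (Pm' M). (-1::real)^card B / (real (\<Prod>B))^2)"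
  proof (intro sum.cong refl)
    fix B assume "B \<in> Pow (Pm' M)"
    then have fB: "finite B" by (auto intro: finite_subset[OF _ Pm'_fin])
    have "(\<Prod>p\<in>B. - 1 / (real p)^2) = (\<Prod>p\<in>B. (-1::real)) / (\<Prod>p\<in>B. (real p)^2)"
      by (rule prod_dividef)
    also have "\<dots> = (-1::real)^card B / (real (\<Prod>B))^2"
      using fB by (simp add: of_nat_prod prod_power_distrib)
    finally show "(\<Prod>p\<in>B. - 1 / (real p)^2) * (\<Prod>p\<in>Pm' M - B. 1) = (-1::real)^card B / (real (\<Prod>B))^2"
      by simp
  qed
  finally show ?thesis .
qed

definition vv :: "nat \<Rightarrow> nat \<Rightarrow> real" where
  "vv M m = (if m > 0 \<and> Pm' M \<inter> prime_factors m = {} then 1 / (real m)^2 else 0)"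

lemma vv_sums: "vv M sums (zeta2 * TT M)"
proof -
  have "(\<lambda>m. \<Sum>B\<in>Pow (Pm' M). (-1::real)^card B * (if \<Prod>B dvd m then 1 / (real m)^2 else 0))
        sums (\<Sum>B\<in>Pow (Pm' M). (-1::real)^card B * (zeta2 / (real (\<Prod>B))^2))"
  proof (intro sums_sum sums_mult mult_sums)
    fix B assume "B \<in> Pow (Pm' M)"
    then show "\<Prod>B > 0" using Pm'_prime by (intro prod_primes_pos) auto
  qed
  moreover have "(\<lambda>m. \<Sum>B\<in>Pow (Pm' M). (-1::real)^card B * (if \<Prod>B dvd m then 1 / (real m)^2 else 0)) = vv M"
  proof
    fix m show "(\<Sum>B\<in>Pow (Pm' M). (-1::real)^card B * (if \<Prod>B dvd m then 1 / (real m)^2 else 0)) = vv M m"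
      by (cases "m = 0") (simp_all add: sieve_point vv_def)
  qed
  moreover have "(\<Sum>B\<in>Pow (Pm' M). (-1::real)^card B * (zeta2 / (real (\<Prod>B))^2)) = zeta2 * TT M"
    unfolding TT_expand by (simp add: sum_distrib_left mult.commute)
  ultimately show ?thesis by simp
qed

lemma vv_small: "m \<le> M \<Longrightarrow> vv M m = (if m = 1 then 1 else 0)"
proof -
  assume mM: "m \<le> M"
  show ?thesis
  proof (cases "m \<ge> 2")
    case True
    then obtain p where p: "prime p" "p dvd m" using prime_factor_nat[of m] by auto
    then have "p \<le> m" using True by (simp add: dvd_imp_le)
    then have "p \<in> Pm' M \<inter> prime_factors m" using p mM True by (auto simp: Pm'_def in_prime_factors_iff)
    then show ?thesis using True by (auto simp: vv_def)
  next
    case False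
    then have "m = 0 \<or> m = 1" by auto
    then show ?thesis by (auto simp: vv_def)
  qed
qed

lemma TT_lim: "TT \<longlonglongrightarrow> 1 / zeta2"
proof -
  define tail where "tail M = zeta2 - (\<Sum>m<Suc M. 1 / (real m)^2)" for M
  have tail0: "tail \<longlonglongrightarrow> 0"
  proof -
    have "(\<lambda>n. \<Sum>m<n. 1 / (real m)^2) \<longlonglongrightarrow> zeta2" using inv_sq_sums by (simp add: sums_def)
    then have "(\<lambda>M. \<Sum>m<Suc M. 1 / (real m)^2) \<longlonglongrightarrow> zeta2" by (rule LIMSEQ_Suc)
    then have "(\<lambda>M. zeta2 - (\<Sum>m<Suc M. 1 / (real m)^2)) \<longlonglongrightarrow> zeta2 - zeta2" by (intro tendsto_diff tendsto_const)
    then show ?thesis unfolding tail_def by (simp only: diff_self)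
  qed
  have bounds: "1 \<le> zeta2 * TT M \<and> zeta2 * TT M \<le> 1 + tail M" for M
  proof -
    define u where "u m = (if m = 1 then (1::real) else 0)" for m :: nat
    have u_sums: "u sums 1"
    proof -
      have "u sums (\<Sum>m\<in>{1}. u m)" by (rule sums_finite) (auto simp: u_def)
      then show ?thesis by (simp add: u_def)
    qed
    define w where "w m = (if m \<le> M then 0 else 1 / (real m)^2)" for m :: nat
    have w_sums: "w sums tail M"
    proof -
      have "(\<lambda>m. if m \<in> {..M} then 1 / (real m)^2 else 0) sums (\<Sum>m\<in>{..M}. 1 / (real m)^2)"
        by (rule sums_If_finite_set) simp
      from sums_diff[OF inv_sq_sums this]
      have "(\<lambda>m. 1 / (real m)^2 - (if m \<in> {..M} then 1 / (real m)^2 else 0)) sums (zeta2 - (\<Sum>m\<in>{..M}. 1 / (real m)^2))" .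
      moreover have "(\<lambda>m. 1 / (real m)^2 - (if m \<in> {..M} then 1 / (real m)^2 else 0)) = w"
        by (auto simp: w_def)
      moreover have "{..M} = {..<Suc M}" by auto
      ultimately show ?thesis by (simp add: tail_def)
    qed
    have "1 \<le> zeta2 * TT M"
    proof -
      have "suminf u \<le> suminf (vv M)"
      proof (rule suminf_le)
        fix m show "u m \<le> vv M m"
          by (cases "m = 1") (auto simp: u_def vv_def)
      qed (use u_sums vv_sums in \<open>auto simp: sums_iff\<close>)
      then show ?thesis using u_sums vv_sums by (simp add: sums_iff)
    qed
    moreover have "zeta2 * TT M \<le> 1 + tail M"
    proof -
      have "suminf (vv M) \<le> suminf (\<lambda>m. u m + w m)"
      proof (rule suminf_le)
        fix m show "vv M m \<le> u m + w m"
        proof (cases "m \<le> M")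
          case True then show ?thesis using vv_small[OF True] by (simp add: u_def w_def)
        next
          case False then show ?thesis by (auto simp: u_def w_def vv_def)
        qed
      qed (use u_sums vv_sums w_sums sums_add[OF u_sums w_sums] in \<open>auto simp: sums_iff\<close>)
      then show ?thesis using vv_sums sums_add[OF u_sums w_sums] by (simp add: sums_iff)
    qed
    ultimately show ?thesis by simp
  qed
  have "(\<lambda>M. zeta2 * TT M) \<longlonglongrightarrow> 1"
  proof (rule tendsto_sandwich[of "\<lambda>M. 1" _ _ "\<lambda>M. 1 + tail M"])
    show "\<forall>\<^sub>F M in sequentially. 1 \<le> zeta2 * TT M" using bounds by simp
    show "\<forall>\<^sub>F M in sequentially. zeta2 * TT M \<le> 1 + tail M" using bounds by simp
    show "(\<lambda>M. 1::real) \<longlonglongrightarrow> 1" by simp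
    show "(\<lambda>M. 1 + tail M) \<longlonglongrightarrow> 1" using tendsto_add[OF tendsto_const tail0, of 1] by simp
  qed
  then have "(\<lambda>M. (zeta2 * TT M) / zeta2) \<longlonglongrightarrow> 1 / zeta2"
    by (intro tendsto_divide tendsto_const) (auto simp: zeta2_def)
  moreover have "zeta2 \<noteq> 0" by (simp add: zeta2_def)
  ultimately show ?thesis by simp
qed




lemma Pm_eq: "Pm M = Pm' M" by (simp add: Pm_def Pm'_def)

lemma factor_eq_real:
  fixes x :: real
  assumes "x \<ge> 2"
  shows "1 + (- 1 / x^2) + (- (1 - 1 / x) / x^2) = (1 - 1 / x^2) * (1 - 1 / (x * (x + 1)))"
proof -
  have x0: "x \<noteq> 0" "x + 1 \<noteq> 0" using assms by auto
  have e1: "1 + (- 1 / x^2) + (- (1 - 1 / x) / x^2) = (x^3 - 2*x + 1) / x^3"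
    using x0 by (simp add: field_simps power2_eq_square power3_eq_cube)
  have e2: "(1 - 1 / x^2) * (1 - 1 / (x * (x + 1))) = ((x^2 - 1) / x^2) * ((x * (x + 1) - 1) / (x * (x + 1)))"
    using x0 by (simp add: diff_divide_distrib)
  also have "\<dots> = ((x^2 - 1) * (x * (x + 1) - 1)) / (x^2 * (x * (x + 1)))"
    by simp
  also have "(x^2 - 1) * (x * (x + 1) - 1) = (x^3 - 2*x + 1) * (x + 1)"
    by (simp add: algebra_simps power2_eq_square power3_eq_cube)
  also have "x^2 * (x * (x + 1)) = x^3 * (x + 1)"
    by (simp add: algebra_simps power2_eq_square power3_eq_cube)
  also have "(x^3 - 2*x + 1) * (x + 1) / (x^3 * (x + 1)) = (x^3 - 2*x + 1) / x^3"
    using x0 by simp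
  finally show ?thesis using e1 by simp
qed

lemma factor_eq:
  assumes "prime p"
  shows "1 + (- 1 / (real p)^2) + (- (1 - 1 / real p) / (real p)^2)
       = (1 - 1 / (real p)^2) * (1 - 1 / (real p * (real p + 1)))"
  using assms prime_ge_2_nat by (intro factor_eq_real) simp

definition pp :: "nat \<Rightarrow> real" where
  "pp M = (\<Prod>p\<in>Pm M. 1 - 1 / (real p * (real p + 1)))"

lemma TT_pos: "TT M > 0"
  unfolding TT_def
proof (rule prod_pos)
  fix p assume "p \<in> Pm' M"
  then have "real p \<ge> 2" by (simp add: Pm'_def prime_ge_2_nat)
  then have "1 < real p * real p" by (intro less_1_mult) auto
  then have "1 / (real p)^2 < 1" by (simp add: power2_eq_square)
  then show "0 < 1 - 1 / (real p)^2" by simp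
qed

lemma pp_eq: "pp M = (\<Prod>p\<in>Pm M. 1 + (- 1 / (real p)^2) + (- (1 - 1 / real p) / (real p)^2)) / TT M"
proof -
  have "(\<Prod>p\<in>Pm M. 1 + (- 1 / (real p)^2) + (- (1 - 1 / real p) / (real p)^2))
      = (\<Prod>p\<in>Pm M. (1 - 1 / (real p)^2) * (1 - 1 / (real p * (real p + 1))))"
    by (intro prod.cong refl factor_eq) (simp add: Pm_def)
  also have "\<dots> = TT M * pp M"
    by (simp add: prod.distrib TT_def pp_def Pm_eq)
  finally show ?thesis using TT_pos[of M] by simp
qed

lemma pp_lim: "pp \<longlonglongrightarrow> CC * zeta2"
proof -
  have "(\<lambda>M. (\<Prod>p\<in>Pm M. 1 + (- 1 / (real p)^2) + (- (1 - 1 / real p) / (real p)^2)) / TT M)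
          \<longlonglongrightarrow> CC / (1 / zeta2)"
    by (intro tendsto_divide e_lim TT_lim) (simp add: zeta2_def)
  then show ?thesis by (simp add: pp_eq[abs_def])
qed

lemma TT_le_pp: "TT M \<le> pp M"
  unfolding TT_def pp_def Pm_eq
proof (rule prod_mono)
  fix p assume "p \<in> Pm' M"
  then have pn: "p \<ge> 2" by (simp add: Pm'_def prime_ge_2_nat)
  then have p2: "real p \<ge> 2" by simp
  then have "1 < real p * real p" by (intro less_1_mult) auto
  then have "1 / (real p)^2 < 1" by (simp add: power2_eq_square)
  moreover have "1 / (real p * (real p + 1)) \<le> 1 / (real p)^2"
    using p2 pn by (intro divide_left_mono) (auto simp: power2_eq_square)
  ultimately show "0 \<le> 1 - 1 / (real p)^2 \<and> 1 - 1 / (real p)^2 \<le> 1 - 1 / (real p * (real p + 1))"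
    by simp
qed

lemma const_eq: "sqfree_farey_const = CC * zeta2"
proof -
  define fac where "fac i = (if prime i then 1 - 1 / (real i * (real i + 1)) else 1)" for i :: nat
  have part: "(\<Prod>i\<le>n. fac (i + 0)) = pp n" for n
  proof -
    have "(\<Prod>i\<le>n. fac (i + 0)) = (\<Prod>i\<in>{..n}. if prime i then 1 - 1 / (real i * (real i + 1)) else 1)"
      by (simp add: fac_def)
    also have "\<dots> = (\<Prod>i\<in>{i\<in>{..n}. prime i}. 1 - 1 / (real i * (real i + 1)))"
      by (rule prod.inter_filter[OF finite_atMost, symmetric])
    also have "{i\<in>{..n}. prime i} = Pm n" by (auto simp: Pm_def)
    finally show ?thesis by (simp add: pp_def)
  qed
  have L0: "CC * zeta2 \<noteq> 0"
  proof -
    have "1 / zeta2 \<le> CC * zeta2"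
      using TT_lim pp_lim TT_le_pp by (intro LIMSEQ_le) auto
    moreover have "1 / zeta2 > 0" by (simp add: zeta2_def)
    ultimately show ?thesis by linarith
  qed
  have "raw_has_prod fac 0 (CC * zeta2)"
    unfolding raw_has_prod_def part using pp_lim L0 by simp
  then have "fac has_prod (CC * zeta2)" by (simp add: has_prod_def)
  then have "CC * zeta2 = prodinf fac" by (rule has_prod_unique)
  moreover have "fac = (\<lambda>p. if prime p then 1 - 1 / (real p * (real p + 1)) else 1)"
    by (rule ext) (simp add: fac_def)
  ultimately show ?thesis by (simp add: sqfree_farey_const_def)
qed

lemma card_farey: "real (card (farey_sqfree Q)) = Ssum Q"
proof -
  define S where "S = (SIGMA q:{q\<in>{1..Q}. squarefree q}. totatives q)"
  define \<phi> :: "nat \<times> nat \<Rightarrow> rat" where "\<phi> x = of_nat (snd x) / of_nat (fst x)" for x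
  have img: "farey_sqfree Q = \<phi> ` S"
  proof (intro equalityI subsetI)
    fix x assume "x \<in> farey_sqfree Q"
    then obtain a q where h: "x = of_nat a / of_nat q" "0 < a" "a \<le> q" "q \<le> Q" "coprime a q" "squarefree q"
      by (auto simp: farey_sqfree_def)
    then have "(q,a) \<in> S" by (auto simp: S_def in_totatives_iff)
    then show "x \<in> \<phi> ` S" using h by (auto simp: \<phi>_def image_iff intro!: bexI[of _ "(q,a)"])
  next
    fix x assume "x \<in> \<phi> ` S"
    then obtain q a where h: "x = of_nat a / of_nat q" "q \<in> {1..Q}" "squarefree q" "a \<in> totatives q"
      by (auto simp: S_def \<phi>_def)
    then show "x \<in> farey_sqfree Q" by (auto simp: farey_sqfree_def in_totatives_iff)
  qed
  have inj: "inj_on \<phi> S"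
  proof (rule inj_onI)
    fix x y assume x: "x \<in> S" and y: "y \<in> S" and eq: "\<phi> x = \<phi> y"
    obtain q a where xq: "x = (q,a)" by (cases x)
    obtain q' a' where yq: "y = (q',a')" by (cases y)
    have h: "q \<ge> 1" "q' \<ge> 1" "coprime a q" "coprime a' q'" using x y xq yq
      by (auto simp: S_def in_totatives_iff)
    have "(of_nat a :: rat) / of_nat q = of_nat a' / of_nat q'" using eq xq yq by (simp add: \<phi>_def)
    then have "(of_nat a :: rat) * of_nat q' = of_nat a' * of_nat q" using h by (simp add: frac_eq_eq)
    then have e: "a * q' = a' * q" by (metis of_nat_eq_iff of_nat_mult)
    have "q dvd a * q'" using e by simp
    then have d1: "q dvd q'" using h(3) by (metis coprime_commute coprime_dvd_mult_right_iff)
    have "q' dvd a' * q" using e[symmetric] by simp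
    then have d2: "q' dvd q" using h(4) by (metis coprime_commute coprime_dvd_mult_right_iff)
    have "q = q'" using d1 d2 by (rule dvd_antisym)
    then have "a = a'" using e h by simp
    then show "x = y" using xq yq \<open>q = q'\<close> by simp
  qed
  have "card (farey_sqfree Q) = card S" unfolding img using inj by (rule card_image)
  also have "\<dots> = (\<Sum>q\<in>{q\<in>{1..Q}. squarefree q}. card (totatives q))"
    unfolding S_def by (rule card_SigmaI) auto
  also have "\<dots> = (\<Sum>q\<in>{q\<in>{1..Q}. squarefree q}. totient q)" by (simp add: totient_def)
  finally have "real (card (farey_sqfree Q)) = (\<Sum>q\<in>{q\<in>{1..Q}. squarefree q}. real (totient q))"
    by simp
  also have "\<dots> = Ssum Q" unfolding Ssum_def by (rule sum.inter_filter[OF finite_atLeastAtMost])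
  finally show ?thesis .
qed

theorem proposition1:
  shows "(\<lambda>Q::nat. real (card (farey_sqfree Q)) - 3 * (real Q)^2 / pi^2 * sqfree_farey_const)
           \<in> O(\<lambda>Q. real Q powr (3/2))"
proof (rule bigoI[where c = 6])
  show "\<forall>\<^sub>F Q in at_top. norm (real (card (farey_sqfree Q)) - 3 * (real Q)^2 / pi^2 * sqfree_farey_const)
         \<le> 6 * norm (real Q powr (3/2))"
  proof (rule eventually_mono[OF eventually_ge_at_top[of "1::nat"]])
    fix Q :: nat assume Q: "Q \<ge> 1"
    have c: "3 * (real Q)^2 / pi^2 * sqfree_farey_const = (real Q)^2 / 2 * CC"
      unfolding const_eq zeta2_def by (simp add: field_simps)
    have p: "real Q powr (3/2) = real Q * sqrt (real Q)"
    proof -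
      have "real Q powr (3/2) = real Q powr (1 + 1/2)" by simp
      also have "\<dots> = real Q powr 1 * real Q powr (1/2)" using Q by (subst powr_add) auto
      also have "\<dots> = real Q * sqrt (real Q)" using Q by (simp add: powr_half_sqrt)
      finally show ?thesis .
    qed
    show "norm (real (card (farey_sqfree Q)) - 3 * (real Q)^2 / pi^2 * sqfree_farey_const)
         \<le> 6 * norm (real Q powr (3/2))"
      using main_asym[OF Q] unfolding c card_farey p by simp
  qed
qed


end
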